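(* Assume the sparsity setting with $1\le p\le2$. Let $(c^\ast,s^\ast)\in X\times Y$, $u^\ast=B(c^\ast,s^\ast)$, with $c^\ast$ a $\Phi_p$-minimizing solution, and let $u_\delta\in Z$, $s_{\mathrm{mod},\epsilon}\in Y$ with $\|u^\ast-u_\delta\|\le\delta$, $\|s^\ast-s_{\mathrm{mod},\epsilon}\|\le\epsilon$. Let $0<\alpha_{\max}<\infty$ and assume there exist $\kappa_1\in[0,1)$, $\kappa_2\ge0$, $0\le\kappa_3<\min\{1,\gamma/(2\alpha_{\max})\}$ and $\xi^\ast=(\xi_{c^\ast},\xi_{s^\ast})\in\partial\tilde{\mathcal{R}}(c^\ast,s^\ast)$ such that for all $(c,s)\in X\times Y$ $$\langle\xi^\ast,(c^\ast-c,s^\ast-s)\rangle\le\kappa_1D^{\xi^\ast}_{\tilde{\mathcal{R}}}((c,s),(c^\ast,s^\ast))+\kappa_2\|B(c,s)-B(c^\ast,s^\ast)\|+\kappa_3\|s-s^\ast\|^2.$$ For $0<\alpha\le\alpha_{\max}$ let $(c^\alpha,s^\alpha)$ be a minimizer of $J^{u_\delta,s_{\mathrm{mod},\epsilon}}_{\alpha,\nu_1\alpha,\nu_2\alpha}$. If $\alpha\sim\delta+\epsilon$, then as $\delta+\epsilon\to0$ $$D^{\xi^\ast}_{\tilde{\mathcal{R}}}((c^\alpha,s^\alpha),(c^\ast,s^\ast))=\mathcal{O}(\delta+\epsilon),\qquad\|B(c^\alpha,s^\alpha)-B(c^\ast,s^\ast)\|=\mathcal{O}(\delta+\epsilon).$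$
   Context: Sparsity setting: $X,Y,Z$ are Hilbert spaces; $X\times Y$ carries the inner product $\langle (c_1,s_1),(c_2,s_2)\rangle=\langle c_1,c_2\rangle_X+\langle s_1,s_2\rangle_Y$. $B:X\times Y\to Z$ is bilinear, satisfies $\|B(c,s)\|_Z\le C\|c\|_X\|s\|_Y$ for some $C>0$, and is sequentially weak-weak continuous. $Y_n\subset Y$ is a finite-dimensional subspace, $P:Y\to Y_n$ is linear and bounded, $s_{\mathrm{calib}}\in Y_n$. $\mathcal{R}_s:Y\to[0,\infty)$ is proper, convex and weakly lower semi-continuous. $\{\varphi_i\}_{i\in\mathbb{N}}$ is an orthonormal basis of $X$, weights satisfy $1\le w_i<\infty$, and $\Phi_p(c)=\sum_iw_i|\langle c,\varphi_i\rangle|^p$. Fix $\gamma>0$ and $\nu_1,\nu_2\in(0,\infty)$. $J^{u,s_m}_{\alpha,\beta,\mu}(c,s)=\frac12\|B(c,s)-u\|^2+\frac{\gamma}{2}\|s-s_m\|^2+\frac{\mu}{2}\|P(s)-s_{\mathrm{calib}}\|^2+\alpha\Phi_p(c)+\beta\mathcal{R}_s(s)$; $\tilde{\mathcal{R}}(c,s)=\Phi_p(c)+\frac{\nu_2}{2}\|P(s)-s_{\mathrm{calib}}\|^2+\nu_1\mathcal{R}_s(s)$. $c^\ast$ is a $\Phi_p$-minimizing solution if $c^\ast\in\arg\min\{\Phi_p(c):B(c,s^\ast)=u^\ast\}$. For a convex functional $\mathcal{R}$ and $\xi\in\partial\mathcal{R}(x^\ast)$, $D^{\xi}_{\mathcal{R}}(x,x^\ast)=\mathcal{R}(x)-\mathcal{R}(x^\ast)-\langle\xi,x-x^\ast\rangle$.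 $\alpha\sim\delta+\epsilon$ means $m(\delta+\epsilon)\le\alpha\le M(\delta+\epsilon)$ for constants $0<m\le M$. *)

theory Defs
  imports "HOL-Analysis.Analysis"
begin

definition weak_conv :: "(nat \<Rightarrow> 'a::real_inner) \<Rightarrow> 'a \<Rightarrow> bool" where
  "weak_conv xs x \<longleftrightarrow> (\<forall>z. (\<lambda>n. inner (xs n) z) \<longlonglongrightarrow> inner x z)"

definition seq_weak_weak_cont :: "('x::real_inner \<Rightarrow> 'y::real_inner \<Rightarrow> 'z::real_inner) \<Rightarrow> bool" where
  "seq_weak_weak_cont B \<longleftrightarrow>
     (\<forall>cs ss c s. weak_conv (\<lambda>n. (cs n, ss n)) (c, s) \<longrightarrow>
        weak_conv (\<lambda>n. B (cs n) (ss n)) (B c s))"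

definition weakly_lsc :: "('a::real_inner \<Rightarrow> real) \<Rightarrow> bool" where
  "weakly_lsc f \<longleftrightarrow>
     (\<forall>xs x. weak_conv xs x \<longrightarrow> ereal (f x) \<le> liminf (\<lambda>n. ereal (f (xs n))))"

definition orthonormal_basis :: "(nat \<Rightarrow> 'a::real_inner) \<Rightarrow> bool" where
  "orthonormal_basis \<phi> \<longleftrightarrow>
     (\<forall>i j. inner (\<phi> i) (\<phi> j) = (if i = j then 1 else 0)) \<and>
     (\<forall>c. (\<lambda>n. \<Sum>i<n. inner c (\<phi> i) *\<^sub>R \<phi> i) \<longlonglongrightarrow> c)"

definition fin_dim_subspace :: "'a::real_vector set \<Rightarrow> bool" where
  "fin_dim_subspace V \<longleftrightarrow> subspace V \<and> (\<exists>S. finite S \<and> span S = V)"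

definition Phi_p :: "(nat \<Rightarrow> real) \<Rightarrow> (nat \<Rightarrow> 'a::real_inner) \<Rightarrow> real \<Rightarrow> 'a \<Rightarrow> ereal" where
  "Phi_p w \<phi> p c = (\<Sum>i. ereal (w i * \<bar>inner c (\<phi> i)\<bar> powr p))"

definition J_fun ::
  "('x::real_inner \<Rightarrow> 'y::real_inner \<Rightarrow> 'z::real_inner) \<Rightarrow> ('y \<Rightarrow> 'y) \<Rightarrow> 'y \<Rightarrow> real
   \<Rightarrow> ('x \<Rightarrow> ereal) \<Rightarrow> ('y \<Rightarrow> real)
   \<Rightarrow> 'z \<Rightarrow> 'y \<Rightarrow> real \<Rightarrow> real \<Rightarrow> real \<Rightarrow> 'x \<times> 'y \<Rightarrow> ereal" where
  "J_fun B P s_calib \<gamma> Phi Rs u s_m \<alpha> \<beta> \<mu> cs =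
     (case cs of (c, s) \<Rightarrow>
       ereal (1/2 * (norm (B c s - u))\<^sup>2 + \<gamma>/2 * (norm (s - s_m))\<^sup>2
              + \<mu>/2 * (norm (P s - s_calib))\<^sup>2)
       + ereal \<alpha> * Phi c + ereal (\<beta> * Rs s))"

definition R_tilde ::
  "('y::real_inner \<Rightarrow> 'y) \<Rightarrow> 'y \<Rightarrow> ('x::real_inner \<Rightarrow> ereal) \<Rightarrow> ('y \<Rightarrow> real)
   \<Rightarrow> real \<Rightarrow> real \<Rightarrow> 'x \<times> 'y \<Rightarrow> ereal" where
  "R_tilde P s_calib Phi Rs \<nu>1 \<nu>2 cs =
     (case cs of (c, s) \<Rightarrow>
        Phi c + ereal (\<nu>2/2 * (norm (P s - s_calib))\<^sup>2 + \<nu>1 * Rs s))"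

definition subdiff :: "('a::real_inner \<Rightarrow> ereal) \<Rightarrow> 'a \<Rightarrow> 'a set" where
  "subdiff f x = {\<xi>. \<bar>f x\<bar> \<noteq> \<infinity> \<and> (\<forall>y. f x + ereal (inner \<xi> (y - x)) \<le> f y)}"

definition bregman :: "('a::real_inner \<Rightarrow> ereal) \<Rightarrow> 'a \<Rightarrow> 'a \<Rightarrow> 'a \<Rightarrow> ereal" where
  "bregman f \<xi> x xstar = f x - f xstar - ereal (inner \<xi> (x - xstar))"

end

theory Submission
  imports Defs
begin

lemma sq_split:
  fixes q S e :: real
  assumes "0 \<le> q" "q < 1"
  shows "q * (S+e)^2 \<le> S^2 + e^2/(1-q)"
proof -
  have h: "0 \<le> ((1-q)*S - q*e)^2" by simp
  have "(1-q)*(q*(S+e)^2) \<le> (1-q)*(S^2 + e^2/(1-q))"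
  proof -
    have "(1-q)*(S^2 + e^2/(1-q)) = (1-q)*S^2 + e^2" using assms by (simp add: field_simps)
    moreover have "(1-q)*(S^2) + e^2 - (1-q)*(q*(S+e)^2) = ((1-q)*S - q*e)^2 + (1-q)*e^2"
      by (simp add: power2_eq_square algebra_simps)
    moreover have "0 \<le> (1-q)*e^2" using assms by simp
    ultimately show ?thesis using h by linarith
  qed
  thus ?thesis using assms by (simp add: mult_le_cancel_left)
qed

lemma real_core:
  fixes N S a b D \<alpha> t \<delta> \<epsilon> \<gamma> \<kappa>1 \<kappa>2 \<kappa>3 \<alpha>max m M :: real
  assumes H: "N^2/2 + \<gamma>/2*S^2 + \<alpha>*(1-\<kappa>1)*D \<le> \<delta>^2/2 + \<gamma>/2*\<epsilon>^2 + \<alpha>*\<kappa>2*a + \<alpha>*\<kappa>3*b^2"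
    and "0\<le>D" "0\<le>a" "0\<le>b" "0\<le>N" "0\<le>S" "a \<le> N+\<delta>" "b \<le> S+\<epsilon>" "0\<le>\<delta>" "0\<le>\<epsilon>"
    and t: "t = \<delta>+\<epsilon>"
    and "0<\<alpha>" "\<alpha>\<le>\<alpha>max" "m*t \<le> \<alpha>" "\<alpha> \<le> M*t" "0<m" "0<\<gamma>" "0\<le>\<kappa>1" "\<kappa>1<1" "0\<le>\<kappa>2" "0\<le>\<kappa>3"
    "\<kappa>3 < \<gamma>/(2*\<alpha>max)" "0<\<alpha>max"
  defines "q \<equiv> 2*\<alpha>max*\<kappa>3/\<gamma>"
  defines "K \<equiv> 1 + \<gamma>/2 + \<gamma>/2/(1-q)"
  defines "C1 \<equiv> 4*M*\<kappa>2 + 2*(K+1)"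
  shows "a \<le> C1 * t \<and> D \<le> (K + M*\<kappa>2*C1)/(m*(1-\<kappa>1)) * t"
proof -
  have q0: "0 \<le> q" using assms by (simp add: q_def)
  have q1: "q < 1" using assms by (simp add: q_def field_simps)
  have t0: "0 < t"
  proof (rule ccontr)
    assume "\<not> 0 < t" hence "t = 0" using assms by simp
    thus False using assms by simp
  qed
  have M0: "0 \<le> M"
  proof (rule ccontr)
    assume "\<not> 0 \<le> M" hence "M*t < 0" using t0 by (simp add: mult_neg_pos)
    thus False using assms by simp
  qed
  have ak: "\<alpha>*\<kappa>3 \<le> q*\<gamma>/2" using assms by (simp add: q_def mult_right_mono)
  have bb: "b^2 \<le> (S+\<epsilon>)^2" using assms by (simp add: power_mono)
  have "\<alpha>*\<kappa>3*b^2 \<le> (q*\<gamma>/2)*(S+\<epsilon>)^2"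
    using ak bb assms by (meson mult_mono mult_nonneg_nonneg zero_le_power2 less_imp_le order_trans mult_nonneg_nonneg)
  also have "\<dots> = \<gamma>/2 * (q*(S+\<epsilon>)^2)" by simp
  also have "\<dots> \<le> \<gamma>/2 * (S^2 + \<epsilon>^2/(1-q))"
    using sq_split[OF q0 q1] assms by (intro mult_left_mono) auto
  finally have b3: "\<alpha>*\<kappa>3*b^2 \<le> \<gamma>/2*S^2 + \<gamma>/2/(1-q)*\<epsilon>^2" by (simp add: algebra_simps)
  have aN: "a^2 \<le> 2*N^2 + 2*\<delta>^2"
  proof -
    have "a^2 \<le> (N+\<delta>)^2" using assms by (simp add: power_mono)
    also have "\<dots> \<le> 2*N^2 + 2*\<delta>^2" using sum_squares_ge_zero[of "N-\<delta>" 0]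
      by (simp add: power2_eq_square algebra_simps)
    finally show ?thesis .
  qed
  have dt: "\<delta>^2 \<le> t^2" "\<epsilon>^2 \<le> t^2" using assms by (auto intro!: power_mono)
  have aDk: "0 \<le> \<alpha>*(1-\<kappa>1)*D" using assms by simp
  have ak2: "\<alpha>*\<kappa>2*a \<le> M*\<kappa>2*t*a"
  proof -
    have "\<alpha>*(\<kappa>2*a) \<le> (M*t)*(\<kappa>2*a)" using assms by (intro mult_right_mono) auto
    thus ?thesis by (simp add: algebra_simps)
  qed
  have g0: "0 < \<gamma>" by fact
  have Kq: "0 \<le> \<gamma>/2/(1-q)" using q1 g0 by simp
  have main: "a^2/4 + \<alpha>*(1-\<kappa>1)*D \<le> K*t^2 + M*\<kappa>2*t*a"
  proof -
    have "\<gamma>/2/(1-q)*\<epsilon>^2 \<le> \<gamma>/2/(1-q)*t^2" using mult_left_mono[OF dt(2) Kq] .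
    moreover have "\<gamma>/2*\<epsilon>^2 \<le> \<gamma>/2*t^2" using dt g0 by simp
    moreover have "K*t^2 = t^2 + \<gamma>/2*t^2 + \<gamma>/2/(1-q)*t^2" unfolding K_def by (simp add: algebra_simps)
    ultimately show ?thesis using H b3 aN dt ak2 by linarith
  qed
  have K0: "0 \<le> K" using Kq g0 unfolding K_def by linarith
  have k2: "0 \<le> \<kappa>2" and mpos: "0 < m" and k1: "\<kappa>1 < 1" and apos: "0 \<le> a"
    and ma: "m*t \<le> \<alpha>" and D0: "0 \<le> D" by fact+
  have Mkt: "0 \<le> M*\<kappa>2*t" using M0 k2 t0 by simp
  have C1t: "C1*t = 4*(M*\<kappa>2*t) + 2*((K+1)*t)" unfolding C1_def by (simp add: algebra_simps)
  have C1ta: "C1*t*a = 4*(M*\<kappa>2*t*a) + 2*((K+1)*t*a)" unfolding C1_def by (simp add: algebra_simps)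
  have a_bound: "a \<le> C1*t"
  proof (rule ccontr)
    assume "\<not> a \<le> C1*t"
    hence lt: "C1*t < a" by simp
    have "0 \<le> C1*t" using C1t Mkt K0 t0 by simp
    hence ap: "0 < a" using lt by linarith
    have m1: "a^2/4 \<le> K*t^2 + M*\<kappa>2*t*a" using main aDk by linarith
    have m2: "C1*t*a < a*a" using mult_strict_right_mono[OF lt ap] .
    have "2*(K+1)*t \<le> a" using lt C1t Mkt by linarith
    hence "(K+1)/2*t*(2*(K+1)*t) \<le> (K+1)/2*t*a" using K0 t0 by (intro mult_left_mono) auto
    moreover have "K*t^2 \<le> (K+1)/2*t*(2*(K+1)*t)"
    proof -
      have "K \<le> (K+1)^2" using K0 by (simp add: power2_eq_square algebra_simps)
      hence "K*t^2 \<le> (K+1)^2*t^2" by (simp add: mult_right_mono)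
      moreover have "(K+1)/2*t*(2*(K+1)*t) = (K+1)^2*t^2" by (simp add: power2_eq_square)
      ultimately show ?thesis by linarith
    qed
    ultimately have m3: "K*t^2 \<le> (K+1)*t*a/2" by simp
    have "a^2 = a*a" by (simp add: power2_eq_square)
    thus False using m1 m2 m3 C1ta by linarith
  qed
  have "\<alpha>*(1-\<kappa>1)*D \<le> K*t^2 + M*\<kappa>2*t*a" using main by (smt (verit) zero_le_power2 divide_nonneg_pos)
  also have "\<dots> \<le> K*t^2 + M*\<kappa>2*t*(C1*t)" using mult_left_mono[OF a_bound Mkt] by simp
  finally have D1: "\<alpha>*(1-\<kappa>1)*D \<le> (K + M*\<kappa>2*C1)*t*t" by (simp add: power2_eq_square algebra_simps)
  have "m*t*((1-\<kappa>1)*D) \<le> \<alpha>*((1-\<kappa>1)*D)" using ma k1 D0 by (intro mult_right_mono) auto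
  hence "m*t*(1-\<kappa>1)*D \<le> (K + M*\<kappa>2*C1)*t*t" using D1 by (simp add: mult.assoc)
  hence "t*(m*(1-\<kappa>1)*D) \<le> t*((K + M*\<kappa>2*C1)*t)" by (simp add: algebra_simps)
  hence "m*(1-\<kappa>1)*D \<le> (K + M*\<kappa>2*C1)*t" using t0 by simp
  hence "D \<le> (K + M*\<kappa>2*C1)*t/(m*(1-\<kappa>1))" using mpos k1 by (simp add: field_simps)
  thus ?thesis using a_bound by simp
qed
theorem mainTheorem12:
  fixes B :: "'x::{real_inner,complete_space} \<Rightarrow> 'y::{real_inner,complete_space} \<Rightarrow> 'z::{real_inner,complete_space}"
    and Yn :: "'y set" and P :: "'y \<Rightarrow> 'y" and s_calib :: 'y
    and Rs :: "'y \<Rightarrow> real" and \<phi> :: "nat \<Rightarrow> 'x" and w :: "nat \<Rightarrow> real"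
    and p \<gamma> \<nu>1 \<nu>2 :: real
    and cstar :: 'x and sstar :: 'y and ustar :: 'z
    and \<alpha>max \<kappa>1 \<kappa>2 \<kappa>3 :: real and \<xi>c :: 'x and \<xi>s :: 'y
    and m M :: real
  assumes B_bilin: "bounded_bilinear B"
    and B_weak: "seq_weak_weak_cont B"
    and Yn: "fin_dim_subspace Yn"
    and P_lin: "bounded_linear P" and P_range: "\<forall>y. P y \<in> Yn"
    and s_calib: "s_calib \<in> Yn"
    and Rs_nonneg: "\<forall>s. 0 \<le> Rs s" and Rs_convex: "convex_on UNIV Rs"
    and Rs_wlsc: "weakly_lsc Rs"
    and ONB: "orthonormal_basis \<phi>" and w_ge: "\<forall>i. 1 \<le> w i"
    and gamma: "0 < \<gamma>" and nu1: "0 < \<nu>1" and nu2: "0 < \<nu>2"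
    and p: "1 \<le> p" "p \<le> 2"
    and ustar: "ustar = B cstar sstar"
    and Phi_min: "\<forall>c. B c sstar = ustar \<longrightarrow> Phi_p w \<phi> p cstar \<le> Phi_p w \<phi> p c"
    and amax: "0 < \<alpha>max"
    and k1: "0 \<le> \<kappa>1" "\<kappa>1 < 1" and k2: "0 \<le> \<kappa>2"
    and k3: "0 \<le> \<kappa>3" "\<kappa>3 < min 1 (\<gamma> / (2 * \<alpha>max))"
    and xi_sub: "(\<xi>c, \<xi>s) \<in> subdiff (R_tilde P s_calib (Phi_p w \<phi> p) Rs \<nu>1 \<nu>2) (cstar, sstar)"
    and source: "\<forall>c s. ereal (inner (\<xi>c, \<xi>s) (cstar - c, sstar - s))
        \<le> ereal \<kappa>1 * bregman (R_tilde P s_calib (Phi_p w \<phi> p) Rs \<nu>1 \<nu>2) (\<xi>c, \<xi>s) (c, s) (cstar, sstar)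
          + ereal (\<kappa>2 * norm (B c s - B cstar sstar) + \<kappa>3 * (norm (s - sstar))\<^sup>2)"
    and mM: "0 < m" "m \<le> M"
  shows "\<exists>C \<rho>. 0 < \<rho> \<and>
    (\<forall>\<delta> \<epsilon> u\<delta> smod \<alpha> c\<alpha> s\<alpha>.
       0 \<le> \<delta> \<and> 0 \<le> \<epsilon> \<and> \<delta> + \<epsilon> < \<rho> \<and>
       norm (ustar - u\<delta>) \<le> \<delta> \<and> norm (sstar - smod) \<le> \<epsilon> \<and>
       0 < \<alpha> \<and> \<alpha> \<le> \<alpha>max \<and> m * (\<delta> + \<epsilon>) \<le> \<alpha> \<and> \<alpha> \<le> M * (\<delta> + \<epsilon>) \<and>
       (\<forall>c s. J_fun B P s_calib \<gamma> (Phi_p w \<phi> p) Rs u\<delta> smod \<alpha> (\<nu>1 * \<alpha>) (\<nu>2 * \<alpha>) (c\<alpha>, s\<alpha>)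
              \<le> J_fun B P s_calib \<gamma> (Phi_p w \<phi> p) Rs u\<delta> smod \<alpha> (\<nu>1 * \<alpha>) (\<nu>2 * \<alpha>) (c, s))
       \<longrightarrow> bregman (R_tilde P s_calib (Phi_p w \<phi> p) Rs \<nu>1 \<nu>2) (\<xi>c, \<xi>s) (c\<alpha>, s\<alpha>) (cstar, sstar)
             \<le> ereal (C * (\<delta> + \<epsilon>))
         \<and> norm (B c\<alpha> s\<alpha> - B cstar sstar) \<le> C * (\<delta> + \<epsilon>))"
  proof -
  define Phi where "Phi = Phi_p w \<phi> p"
  define q where "q = 2*\<alpha>max*\<kappa>3/\<gamma>"
  define K where "K = 1 + \<gamma>/2 + \<gamma>/2/(1-q)"
  define C1 where "C1 = 4*M*\<kappa>2 + 2*(K+1)"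
  define C2 where "C2 = (K + M*\<kappa>2*C1)/(m*(1-\<kappa>1))"
  have w0: "\<And>i. 0 \<le> w i" using w_ge by (meson order_trans zero_le_one)
  have Phi0: "\<And>c. 0 \<le> Phi c" unfolding Phi_def Phi_p_def
    using w0 by (intro suminf_0_le) simp
  from xi_sub have fin: "\<bar>R_tilde P s_calib Phi Rs \<nu>1 \<nu>2 (cstar, sstar)\<bar> \<noteq> \<infinity>"
    and sub: "\<And>y. R_tilde P s_calib Phi Rs \<nu>1 \<nu>2 (cstar, sstar) + ereal (inner (\<xi>c, \<xi>s) (y - (cstar, sstar)))
        \<le> R_tilde P s_calib Phi Rs \<nu>1 \<nu>2 y"
    unfolding subdiff_def Phi_def by auto
  have "Phi cstar \<noteq> \<infinity>" using fin by (auto simp: R_tilde_def)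
  then obtain r0 where r0: "Phi cstar = ereal r0" using Phi0[of cstar]
    by (cases "Phi cstar") auto
  show ?thesis
  proof (rule exI[of _ "C1 + C2"], rule exI[of _ "1::real"], rule conjI)
    show "(0::real) < 1" by simp
  next
   show "\<forall>\<delta> \<epsilon> u\<delta> smod \<alpha> c\<alpha> s\<alpha>.
       0 \<le> \<delta> \<and> 0 \<le> \<epsilon> \<and> \<delta> + \<epsilon> < 1 \<and>
       norm (ustar - u\<delta>) \<le> \<delta> \<and> norm (sstar - smod) \<le> \<epsilon> \<and>
       0 < \<alpha> \<and> \<alpha> \<le> \<alpha>max \<and> m * (\<delta> + \<epsilon>) \<le> \<alpha> \<and> \<alpha> \<le> M * (\<delta> + \<epsilon>) \<and>
       (\<forall>c s. J_fun B P s_calib \<gamma> (Phi_p w \<phi> p) Rs u\<delta> smod \<alpha> (\<nu>1 * \<alpha>) (\<nu>2 * \<alpha>) (c\<alpha>, s\<alpha>)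
              \<le> J_fun B P s_calib \<gamma> (Phi_p w \<phi> p) Rs u\<delta> smod \<alpha> (\<nu>1 * \<alpha>) (\<nu>2 * \<alpha>) (c, s))
       \<longrightarrow> bregman (R_tilde P s_calib (Phi_p w \<phi> p) Rs \<nu>1 \<nu>2) (\<xi>c, \<xi>s) (c\<alpha>, s\<alpha>) (cstar, sstar)
             \<le> ereal ((C1 + C2) * (\<delta> + \<epsilon>))
         \<and> norm (B c\<alpha> s\<alpha> - B cstar sstar) \<le> (C1 + C2) * (\<delta> + \<epsilon>)"
   proof (intro allI impI)
    fix \<delta> \<epsilon> u\<delta> smod \<alpha> c\<alpha> s\<alpha>
    assume A: "0 \<le> \<delta> \<and> 0 \<le> \<epsilon> \<and> \<delta> + \<epsilon> < 1 \<and>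
       norm (ustar - u\<delta>) \<le> \<delta> \<and> norm (sstar - smod) \<le> \<epsilon> \<and>
       0 < \<alpha> \<and> \<alpha> \<le> \<alpha>max \<and> m * (\<delta> + \<epsilon>) \<le> \<alpha> \<and> \<alpha> \<le> M * (\<delta> + \<epsilon>) \<and>
       (\<forall>c s. J_fun B P s_calib \<gamma> (Phi_p w \<phi> p) Rs u\<delta> smod \<alpha> (\<nu>1 * \<alpha>) (\<nu>2 * \<alpha>) (c\<alpha>, s\<alpha>)
              \<le> J_fun B P s_calib \<gamma> (Phi_p w \<phi> p) Rs u\<delta> smod \<alpha> (\<nu>1 * \<alpha>) (\<nu>2 * \<alpha>) (c, s))"
    hence d0: "0 \<le> \<delta>" and e0: "0 \<le> \<epsilon>" and nd: "norm (ustar - u\<delta>) \<le> \<delta>"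
      and ne: "norm (sstar - smod) \<le> \<epsilon>" and al: "0 < \<alpha>" "\<alpha> \<le> \<alpha>max"
      and mt: "m * (\<delta> + \<epsilon>) \<le> \<alpha>" and Mt: "\<alpha> \<le> M * (\<delta> + \<epsilon>)"
      and Jmin: "J_fun B P s_calib \<gamma> Phi Rs u\<delta> smod \<alpha> (\<nu>1 * \<alpha>) (\<nu>2 * \<alpha>) (c\<alpha>, s\<alpha>)
              \<le> J_fun B P s_calib \<gamma> Phi Rs u\<delta> smod \<alpha> (\<nu>1 * \<alpha>) (\<nu>2 * \<alpha>) (cstar, sstar)"
      unfolding Phi_def by blast+
    have "Phi c\<alpha> \<noteq> \<infinity>"
    proof
      assume "Phi c\<alpha> = \<infinity>"
      hence "J_fun B P s_calib \<gamma> Phi Rs u\<delta> smod \<alpha> (\<nu>1 * \<alpha>) (\<nu>2 * \<alpha>) (c\<alpha>, s\<alpha>) = \<infinity>"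
        using al by (simp add: J_fun_def)
      moreover have "J_fun B P s_calib \<gamma> Phi Rs u\<delta> smod \<alpha> (\<nu>1 * \<alpha>) (\<nu>2 * \<alpha>) (cstar, sstar) \<noteq> \<infinity>"
        using r0 by (simp add: J_fun_def)
      ultimately show False using Jmin by simp
    qed
    then obtain r1 where r1: "Phi c\<alpha> = ereal r1" using Phi0[of c\<alpha>]
      by (cases "Phi c\<alpha>") auto
    define N where "N = norm (B c\<alpha> s\<alpha> - u\<delta>)"
    define S where "S = norm (s\<alpha> - smod)"
    define N0 where "N0 = norm (B cstar sstar - u\<delta>)"
    define S0 where "S0 = norm (sstar - smod)"
    define a where "a = norm (B c\<alpha> s\<alpha> - B cstar sstar)"
    define b where "b = norm (s\<alpha> - sstar)"
    define RA where "RA = r1 + (\<nu>2/2 * (norm (P s\<alpha> - s_calib))\<^sup>2 + \<nu>1 * Rs s\<alpha>)"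
    define RS where "RS = r0 + (\<nu>2/2 * (norm (P sstar - s_calib))\<^sup>2 + \<nu>1 * Rs sstar)"
    define I where "I = inner \<xi>c (c\<alpha> - cstar) + inner \<xi>s (s\<alpha> - sstar)"
    define D where "D = RA - RS - I"
    have RtA: "R_tilde P s_calib Phi Rs \<nu>1 \<nu>2 (c\<alpha>, s\<alpha>) = ereal RA"
      by (simp add: R_tilde_def RA_def r1)
    have RtS: "R_tilde P s_calib Phi Rs \<nu>1 \<nu>2 (cstar, sstar) = ereal RS"
      by (simp add: R_tilde_def RS_def r0)
    have brD: "bregman (R_tilde P s_calib Phi Rs \<nu>1 \<nu>2) (\<xi>c, \<xi>s) (c\<alpha>, s\<alpha>) (cstar, sstar) = ereal D"
      by (simp add: bregman_def RtA RtS D_def I_def)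
    have D0: "0 \<le> D"
      using sub[of "(c\<alpha>, s\<alpha>)"] by (simp add: RtA RtS D_def I_def)
    have Jr: "N\<^sup>2/2 + \<gamma>/2*S\<^sup>2 + \<alpha>*RA \<le> N0\<^sup>2/2 + \<gamma>/2*S0\<^sup>2 + \<alpha>*RS"
    proof -
      have "1/2 * N\<^sup>2 + \<gamma>/2 * S\<^sup>2 + \<nu>2*\<alpha>/2 * (norm (P s\<alpha> - s_calib))\<^sup>2 + \<alpha>*r1 + \<nu>1*\<alpha>*Rs s\<alpha>
        \<le> 1/2 * N0\<^sup>2 + \<gamma>/2 * S0\<^sup>2 + \<nu>2*\<alpha>/2 * (norm (P sstar - s_calib))\<^sup>2 + \<alpha>*r0 + \<nu>1*\<alpha>*Rs sstar"
        using Jmin by (simp add: J_fun_def r0 r1 N_def S_def N0_def S0_def)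
      thus ?thesis by (simp add: RA_def RS_def algebra_simps)
    qed
    have src: "- I \<le> \<kappa>1 * D + (\<kappa>2 * a + \<kappa>3 * b\<^sup>2)"
    proof -
      have "ereal (inner (\<xi>c, \<xi>s) (cstar - c\<alpha>, sstar - s\<alpha>)) \<le> ereal \<kappa>1 * ereal D + ereal (\<kappa>2 * a + \<kappa>3 * b\<^sup>2)"
        using source brD unfolding Phi_def a_def b_def by metis
      moreover have "inner (\<xi>c, \<xi>s) (cstar - c\<alpha>, sstar - s\<alpha>) = - I"
        by (simp add: I_def inner_diff_right)
      ultimately show ?thesis by simp
    qed
    have "\<alpha> * (- I) \<le> \<alpha> * (\<kappa>1 * D + (\<kappa>2 * a + \<kappa>3 * b\<^sup>2))"
      using src al by (intro mult_left_mono) auto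
    hence src2: "- (\<alpha>*I) \<le> \<alpha>*\<kappa>1*D + \<alpha>*\<kappa>2*a + \<alpha>*\<kappa>3*b\<^sup>2" by (simp add: algebra_simps)
    have eq1: "\<alpha>*RA = \<alpha>*RS + \<alpha>*D + \<alpha>*I" by (simp add: D_def algebra_simps)
    have eq2: "\<alpha>*(1-\<kappa>1)*D = \<alpha>*D - \<alpha>*\<kappa>1*D" by (simp add: algebra_simps)
    have N0d: "N0\<^sup>2 \<le> \<delta>\<^sup>2" using nd ustar unfolding N0_def
      by (intro power_mono) (auto simp: norm_minus_commute)
    have S0e: "S0\<^sup>2 \<le> \<epsilon>\<^sup>2" using ne unfolding S0_def by (intro power_mono) auto
    have "\<gamma>/2*S0\<^sup>2 \<le> \<gamma>/2*\<epsilon>\<^sup>2" using S0e gamma by simp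
    hence H: "N\<^sup>2/2 + \<gamma>/2*S\<^sup>2 + \<alpha>*(1-\<kappa>1)*D \<le> \<delta>\<^sup>2/2 + \<gamma>/2*\<epsilon>\<^sup>2 + \<alpha>*\<kappa>2*a + \<alpha>*\<kappa>3*b\<^sup>2"
      using Jr src2 eq1 eq2 N0d by linarith
    have aN: "a \<le> N + \<delta>"
    proof -
      have "a = norm ((B c\<alpha> s\<alpha> - u\<delta>) + (u\<delta> - ustar))" unfolding a_def ustar by simp
      also have "\<dots> \<le> N + norm (u\<delta> - ustar)" unfolding N_def by (rule norm_triangle_ineq)
      finally show ?thesis using nd by (simp add: norm_minus_commute)
    qed
    have bS: "b \<le> S + \<epsilon>"
    proof -
      have "b = norm ((s\<alpha> - smod) + (smod - sstar))" unfolding b_def by simp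
      also have "\<dots> \<le> S + norm (smod - sstar)" unfolding S_def by (rule norm_triangle_ineq)
      finally show ?thesis using ne by (simp add: norm_minus_commute)
    qed
    have core: "a \<le> C1 * (\<delta>+\<epsilon>) \<and> D \<le> C2 * (\<delta>+\<epsilon>)"
      using real_core[OF H D0 _ _ _ _ aN bS d0 e0 refl al(1) al(2) mt Mt mM(1) gamma k1(1) k1(2) k2 k3(1) _ amax]
        k3(2)
      unfolding C1_def C2_def K_def q_def a_def b_def N_def S_def by auto
    have t0: "0 \<le> \<delta> + \<epsilon>" using d0 e0 by simp
    have "0 \<le> a" "0 \<le> D" unfolding a_def using D0 by auto
    hence "0 \<le> C1 * (\<delta>+\<epsilon>)" "0 \<le> C2 * (\<delta>+\<epsilon>)" using core by linarith+
    hence fin1: "a \<le> (C1 + C2) * (\<delta>+\<epsilon>)" "D \<le> (C1 + C2) * (\<delta>+\<epsilon>)" using core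
      by (simp_all add: distrib_right)
    have G1: "bregman (R_tilde P s_calib (Phi_p w \<phi> p) Rs \<nu>1 \<nu>2) (\<xi>c, \<xi>s) (c\<alpha>, s\<alpha>) (cstar, sstar)
             \<le> ereal ((C1 + C2) * (\<delta> + \<epsilon>))"
      using brD fin1 unfolding Phi_def by simp
    have G2: "norm (B c\<alpha> s\<alpha> - B cstar sstar) \<le> (C1 + C2) * (\<delta> + \<epsilon>)"
      using fin1 unfolding a_def by simp
    show "bregman (R_tilde P s_calib (Phi_p w \<phi> p) Rs \<nu>1 \<nu>2) (\<xi>c, \<xi>s) (c\<alpha>, s\<alpha>) (cstar, sstar)
             \<le> ereal ((C1 + C2) * (\<delta> + \<epsilon>))
         \<and> norm (B c\<alpha> s\<alpha> - B cstar sstar) \<le> (C1 + C2) * (\<delta> + \<epsilon>)" using G1 G2 by blast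
   qed
  qed
qed

end
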